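(* Let $N\ge1$, let $d_1,\dots,d_N$ be positive integers, and for each $l$ fix a basis $\{\mathbf{G}^{(l)}_i\}_{i=0}^{d_l^2-1}$ of the complex $d_l\times d_l$ matrices with $\mathbf{G}^{(l)}_0=\mathbf{I}_{d_l}$, $\mathrm{Tr}(\mathbf{G}^{(l)}_i)=0$ and $\mathrm{Tr}\big((\mathbf{G}^{(l)}_i)^\dagger\mathbf{G}^{(l)}_{i'}\big)=\kappa_l\delta_{ii'}$ for $i,i'\ge1$, where $\kappa_l\ge1$. For every quantum state $\rho$ on $\mathbb{C}^{d_1}\otimes\cdots\otimes\mathbb{C}^{d_N}$, its correlation tensor $\mathcal{T}^{(1\cdots N)}\in\mathbb{C}^{(d_1^2-1)\times\cdots\times(d_N^2-1)}$, with entries $t^{(1\cdots N)}_{i_1\cdots i_N}=\frac{d_1\cdots d_N}{\kappa_1\cdots\kappa_N}\mathrm{Tr}\big(\rho\,(\mathbf{G}^{(1)}_{i_1}\otimes\cdots\otimes\mathbf{G}^{(N)}_{i_N})\big)$ ($i_l\in\{1,\dots,d_l^2-1\}$), satisfies $\|\mathcal{T}^{(1\cdots N)}\|_F^2\le\mathfrak{m}^{(1\cdots N)}$, where, with $D=d_1\cdots d_N$, $K=\kappa_1\cdots\kappa_N$ and $d=\max_{l}d_l$, $$\mathfrak{m}^{(1\cdots N)}=\begin{cases}\frac{d_1^2-d_1}{\kappa_1}, & N=1,\\[2pt] \frac{D}{K}\Big(D+\frac{1}{N-1}-\frac{D}{N-1}\sum_{l=1}^N\frac{1}{d_l^2}\Big),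 & N=2,\ \text{or } N\ge3 \text{ and } \frac{D}{d^2}<1,\\[2pt] \frac{D}{K}\Big(D+\frac{2}{N-2}-\frac{D}{N-2}\sum_{l=1}^N\frac{1}{d_l^2}\Big), & N\ge3 \text{ and } \frac{D}{d^2}\ge1.\end{cases}$$
   Context: A quantum state is a positive semidefinite trace-one matrix. $\|\cdot\|_F$ is the Frobenius norm (square root of the sum of squared moduli of all entries). *)

theory Defs
  imports "HOL-Analysis.Analysis"
begin

text \<open>Composite system C^{d_0} x ... x C^{d_{N-1}} (parties indexed 0..N-1).
  Computational basis indices are functions a with a l < d l for l < N
  (extensional outside {..<N}).\<close>
definition idx :: "nat \<Rightarrow> (nat \<Rightarrow> nat) \<Rightarrow> (nat \<Rightarrow> nat) set" where
  "idx N d = PiE {..<N} (\<lambda>l. {..<d l})"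

definition quantum_state :: "nat \<Rightarrow> (nat \<Rightarrow> nat) \<Rightarrow> ((nat \<Rightarrow> nat) \<Rightarrow> (nat \<Rightarrow> nat) \<Rightarrow> complex) \<Rightarrow> bool" where
  "quantum_state N d \<rho> \<longleftrightarrow>
     (\<forall>v :: (nat \<Rightarrow> nat) \<Rightarrow> complex.
        let s = (\<Sum>a\<in>idx N d. \<Sum>b\<in>idx N d. cnj (v a) * \<rho> a b * v b) in Im s = 0 \<and> Re s \<ge> 0)
   \<and> (\<Sum>a\<in>idx N d. \<rho> a a) = 1"

definition gen_basis :: "nat \<Rightarrow> real \<Rightarrow> (nat \<Rightarrow> nat \<Rightarrow> nat \<Rightarrow> complex) \<Rightarrow> bool" where
  "gen_basis n \<kappa> G \<longleftrightarrow>
     (\<forall>c :: nat \<Rightarrow> complex.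
        (\<forall>a<n. \<forall>b<n. (\<Sum>i<n\<^sup>2. c i * G i a b) = 0) \<longrightarrow> (\<forall>i<n\<^sup>2. c i = 0))
   \<and> (\<forall>a<n. \<forall>b<n. G 0 a b = (if a = b then 1 else 0))
   \<and> (\<forall>i. 1 \<le> i \<and> i < n\<^sup>2 \<longrightarrow> (\<Sum>a<n. G i a a) = 0)
   \<and> (\<forall>i i'. 1 \<le> i \<and> i < n\<^sup>2 \<and> 1 \<le> i' \<and> i' < n\<^sup>2 \<longrightarrow>
        (\<Sum>a<n. \<Sum>b<n. cnj (G i b a) * G i' b a) = (if i = i' then complex_of_real \<kappa> else 0))"

definition corr_entry ::
  "nat \<Rightarrow> (nat \<Rightarrow> nat) \<Rightarrow> (nat \<Rightarrow> real) \<Rightarrow> (nat \<Rightarrow> nat \<Rightarrow> nat \<Rightarrow> nat \<Rightarrow> complex)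
   \<Rightarrow> ((nat \<Rightarrow> nat) \<Rightarrow> (nat \<Rightarrow> nat) \<Rightarrow> complex) \<Rightarrow> (nat \<Rightarrow> nat) \<Rightarrow> complex" where
  "corr_entry N d \<kappa> G \<rho> i =
     complex_of_real ((\<Prod>l<N. real (d l)) / (\<Prod>l<N. \<kappa> l)) *
     (\<Sum>a\<in>idx N d. \<Sum>b\<in>idx N d. \<rho> a b * (\<Prod>l<N. G l (i l) (b l) (a l)))"

definition corr_idx :: "nat \<Rightarrow> (nat \<Rightarrow> nat) \<Rightarrow> (nat \<Rightarrow> nat) set" where
  "corr_idx N d = PiE {..<N} (\<lambda>l. {1..<(d l)\<^sup>2})"

definition frob_sq_corr ::
  "nat \<Rightarrow> (nat \<Rightarrow> nat) \<Rightarrow> (nat \<Rightarrow> real) \<Rightarrow> (nat \<Rightarrow> nat \<Rightarrow> nat \<Rightarrow> nat \<Rightarrow> complex)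
   \<Rightarrow> ((nat \<Rightarrow> nat) \<Rightarrow> (nat \<Rightarrow> nat) \<Rightarrow> complex) \<Rightarrow> real" where
  "frob_sq_corr N d \<kappa> G \<rho> = (\<Sum>i\<in>corr_idx N d. (cmod (corr_entry N d \<kappa> G \<rho> i))\<^sup>2)"

definition mbound :: "nat \<Rightarrow> (nat \<Rightarrow> nat) \<Rightarrow> (nat \<Rightarrow> real) \<Rightarrow> real" where
  "mbound N d \<kappa> =
    (let D = (\<Prod>l<N. real (d l)); K = (\<Prod>l<N. \<kappa> l); dm = real (Max (d ` {..<N}));
         S = (\<Sum>l<N. 1 / (real (d l))\<^sup>2) in
     if N = 1 then ((real (d 0))\<^sup>2 - real (d 0)) / \<kappa> 0
     else if N = 2 \<or> (N \<ge> 3 \<and> D / dm\<^sup>2 < 1)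
       then D / K * (D + 1 / (real N - 1) - D / (real N - 1) * S)
     else D / K * (D + 2 / (real N - 2) - D / (real N - 2) * S))"

end

theory Submission
  imports Defs "Jordan_Normal_Form.Determinant"
begin
lemma sum_divmod:
  fixes f :: "nat \<Rightarrow> nat \<Rightarrow> 'a::comm_monoid_add"
  assumes n: "n > 0"
  shows "(\<Sum>p<n*n. f (p div n) (p mod n)) = (\<Sum>a<n. \<Sum>b<n. f a b)"
proof -
  have bij: "bij_betw (\<lambda>p. (p div n, p mod n)) {..<n*n} ({..<n}\<times>{..<n})"
  proof (rule bij_betw_byWitness[where f'="\<lambda>(a,b). a*n+b"])
    show "\<forall>a\<in>{..<n*n}. (\<lambda>(a, b). a * n + b) (a div n, a mod n) = a" by simp
    show "\<forall>a'\<in>{..<n} \<times> {..<n}. (\<lambda>p. (p div n, p mod n)) ((\<lambda>(a, b). a * n + b) a') = a'"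
      using n by auto
    show "(\<lambda>p. (p div n, p mod n)) ` {..<n * n} \<subseteq> {..<n} \<times> {..<n}"
      using n by (auto simp: less_mult_imp_div_less)
    show "(\<lambda>(a, b). a * n + b) ` ({..<n} \<times> {..<n}) \<subseteq> {..<n * n}"
    proof
      fix p assume "p \<in> (\<lambda>(a, b). a * n + b) ` ({..<n} \<times> {..<n})"
      then obtain a b where ab: "a<n" "b<n" "p = a*n+b" by auto
      have "a*n+b < a*n+n" using ab by simp
      also have "\<dots> = (a+1)*n" by simp
      also have "\<dots> \<le> n*n" using ab by (intro mult_right_mono) auto
      finally show "p \<in> {..<n*n}" using ab by simp
    qed
  qed
  have "(\<Sum>p<n*n. f (p div n) (p mod n)) = (\<Sum>(a,b)\<in>{..<n}\<times>{..<n}. f a b)"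
    using sum.reindex_bij_betw[OF bij, of "\<lambda>(a,b). f a b"] by simp
  also have "\<dots> = (\<Sum>a<n. \<Sum>b<n. f a b)" by (simp add: sum.cartesian_product)
  finally show ?thesis .
qed

definition wt :: "nat \<Rightarrow> real \<Rightarrow> nat \<Rightarrow> real" where
  "wt n k j = (if j = 0 then real n else k)"

lemma gen_basis_ortho:
  assumes gb: "gen_basis n k G" and j: "j < n\<^sup>2" and j': "j' < n\<^sup>2"
  shows "(\<Sum>a<n. \<Sum>b<n. cnj (G j a b) * G j' a b) = (if j = j' then complex_of_real (wt n k j) else 0)"
proof -
  from gb have G0: "\<forall>a<n. \<forall>b<n. G 0 a b = (if a = b then 1 else 0)"
    and tr: "\<forall>i. 1 \<le> i \<and> i < n\<^sup>2 \<longrightarrow> (\<Sum>a<n. G i a a) = 0"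
    and orth: "\<forall>i i'. 1 \<le> i \<and> i < n\<^sup>2 \<and> 1 \<le> i' \<and> i' < n\<^sup>2 \<longrightarrow>
        (\<Sum>a<n. \<Sum>b<n. cnj (G i b a) * G i' b a) = (if i = i' then complex_of_real k else 0)"
    unfolding gen_basis_def by blast+
  have diag: "(\<Sum>a<n. \<Sum>b<n. (if a = b then 1 else 0) * f a b) = (\<Sum>a<n. f a a)" for f :: "nat \<Rightarrow> nat \<Rightarrow> complex"
  proof (intro sum.cong refl)
    fix a assume a: "a \<in> {..<n}"
    have "(\<Sum>b<n. (if a = b then 1 else 0) * f a b) = (\<Sum>b<n. if a = b then f a b else 0)"
      by (intro sum.cong) auto
    also have "\<dots> = f a a" using a by simp
    finally show "(\<Sum>b<n. (if a = b then 1 else 0) * f a b) = f a a" .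
  qed
  show ?thesis
  proof (cases "j = 0")
    case True
    note j0 = True
    show ?thesis
    proof (cases "j' = 0")
      case True
      have "(\<Sum>a<n. \<Sum>b<n. cnj (G j a b) * G j' a b) = (\<Sum>a<n. \<Sum>b<n. (if a = b then 1 else 0) * (if a = b then 1 else 0))"
        using G0 j0 True by (intro sum.cong refl) auto
      also have "\<dots> = of_nat n" by (subst diag) simp
      finally show ?thesis using j0 True by (simp add: wt_def)
    next
      case False
      have "(\<Sum>a<n. \<Sum>b<n. cnj (G j a b) * G j' a b) = (\<Sum>a<n. \<Sum>b<n. (if a = b then 1 else 0) * G j' a b)"
        using G0 j0 by (intro sum.cong refl) auto
      also have "\<dots> = (\<Sum>a<n. G j' a a)" by (rule diag)
      also have "\<dots> = 0" using tr False j' by auto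
      finally show ?thesis using j0 False by simp
    qed
  next
    case False
    note jn0 = False
    show ?thesis
    proof (cases "j' = 0")
      case True
      have "(\<Sum>a<n. \<Sum>b<n. cnj (G j a b) * G j' a b) = (\<Sum>a<n. \<Sum>b<n. (if a = b then 1 else 0) * cnj (G j a b))"
        using G0 True by (intro sum.cong refl) (auto simp: mult.commute)
      also have "\<dots> = (\<Sum>a<n. cnj (G j a a))" by (rule diag)
      also have "\<dots> = cnj (\<Sum>a<n. G j a a)" by simp
      also have "\<dots> = 0" using tr jn0 j by auto
      finally show ?thesis using jn0 True by simp
    next
      case False
      have "(\<Sum>a<n. \<Sum>b<n. cnj (G j a b) * G j' a b) = (\<Sum>b<n. \<Sum>a<n. cnj (G j a b) * G j' a b)"
        by (rule sum.swap)
      also have "\<dots> = (if j = j' then complex_of_real k else 0)"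
        using orth jn0 False j j' by auto
      finally show ?thesis using jn0 by (simp add: wt_def)
    qed
  qed
qed

lemma gen_basis_complete:
  assumes gb: "gen_basis n k G" and n: "n > 0" and k: "k > 0"
    and x1: "x1 < n" and x2: "x2 < n" and y1: "y1 < n" and y2: "y2 < n"
  shows "(\<Sum>j<n\<^sup>2. G j x1 x2 * cnj (G j y1 y2) / complex_of_real (wt n k j))
       = (if x1 = y1 \<and> x2 = y2 then 1 else 0)"
proof -
  have wpos: "wt n k j > 0" for j using n k by (simp add: wt_def)
  define A :: "complex mat" where "A = mat (n\<^sup>2) (n\<^sup>2) (\<lambda>(j,p). G j (p div n) (p mod n))"
  define B :: "complex mat" where "B = mat (n\<^sup>2) (n\<^sup>2) (\<lambda>(p,j). cnj (G j (p div n) (p mod n)) / complex_of_real (wt n k j))"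
  have A: "A \<in> carrier_mat (n\<^sup>2) (n\<^sup>2)" and B: "B \<in> carrier_mat (n\<^sup>2) (n\<^sup>2)"
    unfolding A_def B_def by auto
  have "A * B = 1\<^sub>m (n\<^sup>2)"
  proof (rule eq_matI)
    fix i j assume i: "i < dim_row (1\<^sub>m (n\<^sup>2))" and j: "j < dim_col (1\<^sub>m (n\<^sup>2))"
    hence i': "i < n\<^sup>2" and j': "j < n\<^sup>2" by auto
    have "(A * B) $$ (i, j) = (\<Sum>p<n*n. G i (p div n) (p mod n) * (cnj (G j (p div n) (p mod n)) / complex_of_real (wt n k j)))"
      using i' j' unfolding A_def B_def
      by (simp add: scalar_prod_def power2_eq_square lessThan_atLeast0)
    also have "\<dots> = (\<Sum>a<n. \<Sum>b<n. G i a b * (cnj (G j a b) / complex_of_real (wt n k j)))"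
      by (rule sum_divmod[OF n])
    also have "\<dots> = cnj (\<Sum>a<n. \<Sum>b<n. cnj (G i a b) * G j a b) / complex_of_real (wt n k j)"
      by (simp add: sum_divide_distrib)
    also have "\<dots> = (if i = j then 1 else 0)"
      using gen_basis_ortho[OF gb i' j'] wpos[of i] by auto
    finally show "(A * B) $$ (i, j) = 1\<^sub>m (n\<^sup>2) $$ (i, j)" using i' j' by simp
  qed (auto simp: A_def B_def)
  hence BA: "B * A = 1\<^sub>m (n\<^sup>2)" by (rule mat_mult_left_right_inverse[OF A B])
  define p where "p = y1 * n + y2"
  define q where "q = x1 * n + x2"
  have lt: "a * n + b < n\<^sup>2" if "a < n" "b < n" for a b
  proof -
    have "a*n+b < a*n+n" using that by simp
    also have "\<dots> = (a+1)*n" by simp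
    also have "\<dots> \<le> n*n" using that by (intro mult_right_mono) auto
    finally show ?thesis by (simp add: power2_eq_square)
  qed
  have pl: "p < n\<^sup>2" unfolding p_def using lt y1 y2 .
  have ql: "q < n\<^sup>2" unfolding q_def using lt x1 x2 .
  have pdm: "p div n = y1" "p mod n = y2" unfolding p_def using y2 by auto
  have qdm: "q div n = x1" "q mod n = x2" unfolding q_def using x2 by auto
  have "(B * A) $$ (p, q) = (\<Sum>j<n\<^sup>2. cnj (G j y1 y2) / complex_of_real (wt n k j) * G j x1 x2)"
    using pl ql pdm qdm unfolding A_def B_def
    by (simp add: scalar_prod_def lessThan_atLeast0)
  also have "(B * A) $$ (p, q) = (if p = q then 1 else 0)" using BA pl ql by simp
  also have "(p = q) = (x1 = y1 \<and> x2 = y2)"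
    using pdm qdm by (metis p_def q_def)
  finally have e: "(\<Sum>j<n\<^sup>2. cnj (G j y1 y2) / complex_of_real (wt n k j) * G j x1 x2) = (if x1 = y1 \<and> x2 = y2 then 1 else 0)" by simp
  have "(\<Sum>j<n\<^sup>2. G j x1 x2 * cnj (G j y1 y2) / complex_of_real (wt n k j))
     = (\<Sum>j<n\<^sup>2. cnj (G j y1 y2) / complex_of_real (wt n k j) * G j x1 x2)"
    by (intro sum.cong refl) (simp add: field_simps)
  with e show ?thesis by simp
qed

definition qf :: "'a set \<Rightarrow> ('a \<Rightarrow> 'a \<Rightarrow> complex) \<Rightarrow> ('a \<Rightarrow> complex) \<Rightarrow> complex" where
  "qf X \<rho> v = (\<Sum>a\<in>X. \<Sum>b\<in>X. cnj (v a) * \<rho> a b * v b)"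

definition psd :: "'a set \<Rightarrow> ('a \<Rightarrow> 'a \<Rightarrow> complex) \<Rightarrow> bool" where
  "psd X \<rho> \<longleftrightarrow> (\<forall>v. Im (qf X \<rho> v) = 0 \<and> Re (qf X \<rho> v) \<ge> 0)"

lemma qf_support:
  assumes "finite X" "S \<subseteq> X" "\<And>a. a \<notin> S \<Longrightarrow> v a = 0"
  shows "qf X \<rho> v = qf S \<rho> v"
proof -
  have i: "(\<Sum>b\<in>X. cnj (v a) * \<rho> a b * v b) = (\<Sum>b\<in>S. cnj (v a) * \<rho> a b * v b)" for a
    by (rule sum.mono_neutral_right) (use assms in auto)
  have "qf X \<rho> v = (\<Sum>a\<in>X. \<Sum>b\<in>S. cnj (v a) * \<rho> a b * v b)"
    unfolding qf_def i ..
  also have "\<dots> = qf S \<rho> v"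
    unfolding qf_def
    by (rule sum.mono_neutral_right) (use assms in auto)
  finally show ?thesis .
qed

lemma qf_two:
  assumes "a \<noteq> b"
  shows "qf {a, b} \<rho> v = cnj (v a) * \<rho> a a * v a + cnj (v a) * \<rho> a b * v b + cnj (v b) * \<rho> b a * v a + cnj (v b) * \<rho> b b * v b"
  using assms unfolding qf_def by simp

lemma psd_diag:
  assumes "finite X" "psd X \<rho>" "a \<in> X"
  shows "Im (\<rho> a a) = 0" "Re (\<rho> a a) \<ge> 0"
proof -
  let ?v = "\<lambda>x. if x = a then 1 else 0 :: complex"
  have "qf X \<rho> ?v = qf {a} \<rho> ?v" by (rule qf_support) (use assms in auto)
  also have "\<dots> = \<rho> a a" unfolding qf_def by simp
  finally have e: "qf X \<rho> ?v = \<rho> a a" .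
  from assms(2) have "Im (qf X \<rho> ?v) = 0 \<and> Re (qf X \<rho> ?v) \<ge> 0" unfolding psd_def by blast
  then show "Im (\<rho> a a) = 0" "Re (\<rho> a a) \<ge> 0" unfolding e by auto
qed

lemma psd_herm:
  assumes "finite X" "psd X \<rho>" "a \<in> X" "b \<in> X"
  shows "\<rho> b a = cnj (\<rho> a b)"
proof (cases "a = b")
  case True
  have "Im (\<rho> a a) = 0" using psd_diag(1)[OF assms(1,2,3)] .
  then have "cnj (\<rho> a a) = \<rho> a a" by (intro complex_eqI) simp_all
  then show ?thesis using True by simp
next
  case False
  have da: "Im (\<rho> a a) = 0" using psd_diag(1)[OF assms(1,2,3)] .
  have db: "Im (\<rho> b b) = 0" using psd_diag(1)[OF assms(1,2,4)] .
  have gen: "Im (\<rho> a a + t * \<rho> a b + cnj t * \<rho> b a + cnj t * t * \<rho> b b) = 0" for t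
  proof -
    let ?v = "\<lambda>x. if x = a then 1 else if x = b then t else 0"
    have "qf X \<rho> ?v = qf {a,b} \<rho> ?v" by (rule qf_support) (use assms in auto)
    also have "\<dots> = \<rho> a a + t * \<rho> a b + cnj t * \<rho> b a + cnj t * t * \<rho> b b"
      using False unfolding qf_two[OF False] by simp
    finally have e: "qf X \<rho> ?v = \<rho> a a + t * \<rho> a b + cnj t * \<rho> b a + cnj t * t * \<rho> b b" .
    from assms(2) have "Im (qf X \<rho> ?v) = 0" unfolding psd_def by blast
    then show ?thesis unfolding e .
  qed
  have e1: "Im (\<rho> a b) + Im (\<rho> b a) = 0" using gen[of 1] da db by simp
  have e2: "Re (\<rho> a b) - Re (\<rho> b a) = 0" using gen[of "\<i>"] da db by simp
  show ?thesis using e1 e2 by (simp add: complex_eq_iff)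
qed

lemma psd_zero_diag:
  assumes fin: "finite X" and p: "psd X \<rho>" and x: "x \<in> X" and b: "b \<in> X" and z: "\<rho> x x = 0"
  shows "\<rho> x b = 0"
proof (rule ccontr)
  assume c0: "\<rho> x b \<noteq> 0"
  let ?c = "\<rho> x b"
  have bx: "b \<noteq> x" using c0 z by auto
  have h: "\<rho> b x = cnj ?c" using psd_herm[OF fin p x b] .
  define t where "t = (Re (\<rho> b b) + 1) / (2 * (cmod ?c)\<^sup>2)"
  have cpos: "(cmod ?c)\<^sup>2 > 0" using c0 by simp
  define s where "s = - (complex_of_real t * ?c)"
  have nc: "?c * cnj ?c = complex_of_real ((cmod ?c)\<^sup>2)" by (metis complex_norm_square of_real_power)
  let ?v = "\<lambda>y. if y = x then s else if y = b then 1 else 0"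
  have "qf X \<rho> ?v = qf {x,b} \<rho> ?v" by (rule qf_support) (use fin x b in auto)
  also have "\<dots> = cnj s * \<rho> x x * s + cnj s * ?c + \<rho> b x * s + \<rho> b b"
    using bx unfolding qf_two[OF bx[symmetric]] by simp
  also have "\<dots> = cnj s * ?c + cnj ?c * s + \<rho> b b" using z h by simp
  also have "cnj s * ?c = - complex_of_real (t * (cmod ?c)\<^sup>2)"
  proof -
    have "cnj s * ?c = - (complex_of_real t * (?c * cnj ?c))" unfolding s_def by (simp add: mult_ac)
    then show ?thesis by (simp add: nc)
  qed
  also have "cnj ?c * s = - complex_of_real (t * (cmod ?c)\<^sup>2)"
  proof -
    have "cnj ?c * s = - (complex_of_real t * (?c * cnj ?c))" unfolding s_def by (simp add: mult_ac)
    then show ?thesis by (simp add: nc)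
  qed
  finally have e: "qf X \<rho> ?v = \<rho> b b - complex_of_real (2 * t * (cmod ?c)\<^sup>2)" by simp
  have "2 * t * (cmod ?c)\<^sup>2 = Re (\<rho> b b) + 1" unfolding t_def using cpos by simp
  with e have "Re (qf X \<rho> ?v) = -1" by simp
  moreover from p have "Re (qf X \<rho> ?v) \<ge> 0" unfolding psd_def by blast
  ultimately show False by simp
qed

lemma qf_insert:
  assumes fin: "finite X" and xX: "x \<notin> X" and herm: "\<And>a. a \<in> X \<Longrightarrow> \<rho> a x = cnj (\<rho> x a)"
  shows "qf (insert x X) \<rho> (\<lambda>y. if y = x then s else v y)
       = cnj s * \<rho> x x * s + cnj s * (\<Sum>b\<in>X. \<rho> x b * v b) + cnj (\<Sum>b\<in>X. \<rho> x b * v b) * s + qf X \<rho> v"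
proof -
  let ?v = "\<lambda>y. if y = x then s else v y"
  have vX: "\<And>a. a \<in> X \<Longrightarrow> ?v a = v a" using xX by auto
  have "qf (insert x X) \<rho> ?v = (cnj s * \<rho> x x * s + (\<Sum>b\<in>X. cnj s * \<rho> x b * v b))
      + (\<Sum>a\<in>X. cnj (v a) * \<rho> a x * s + (\<Sum>b\<in>X. cnj (v a) * \<rho> a b * v b))"
    unfolding qf_def using fin xX vX by (simp add: sum.insert)
  also have "(\<Sum>a\<in>X. cnj (v a) * \<rho> a x * s + (\<Sum>b\<in>X. cnj (v a) * \<rho> a b * v b))
     = (\<Sum>a\<in>X. cnj (v a) * \<rho> a x) * s + qf X \<rho> v"
    unfolding qf_def by (simp add: sum.distrib sum_distrib_right)
  also have "(\<Sum>a\<in>X. cnj (v a) * \<rho> a x) = cnj (\<Sum>b\<in>X. \<rho> x b * v b)"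
    using herm by (simp add: mult.commute)
  also have "(\<Sum>b\<in>X. cnj s * \<rho> x b * v b) = cnj s * (\<Sum>b\<in>X. \<rho> x b * v b)"
    by (simp add: sum_distrib_left mult.assoc)
  finally show ?thesis by (simp add: algebra_simps)
qed

lemma psd_mono:
  assumes fin: "finite X" and xX: "x \<notin> X" and p: "psd (insert x X) \<rho>"
    and eq: "\<And>v. \<exists>s. qf X \<rho>' v = qf (insert x X) \<rho> (\<lambda>y. if y = x then s else v y)"
  shows "psd X \<rho>'"
  unfolding psd_def
proof
  fix v
  from eq obtain s where e: "qf X \<rho>' v = qf (insert x X) \<rho> (\<lambda>y. if y = x then s else v y)" by blast
  from p show "Im (qf X \<rho>' v) = 0 \<and> 0 \<le> Re (qf X \<rho>' v)" unfolding e psd_def by blast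
qed

lemma psd_decomp:
  assumes "finite X" "psd X \<rho>"
  shows "\<exists>w. \<forall>a\<in>X. \<forall>b\<in>X. \<rho> a b = (\<Sum>k\<in>X. w k a * cnj (w k b))"
  using assms
proof (induction X arbitrary: \<rho> rule: finite_induct)
  case empty
  then show ?case by simp
next
  case (insert x X)
  have finI: "finite (insert x X)" using insert.hyps by simp
  have xI: "x \<in> insert x X" by simp
  have herm: "\<And>a b. a \<in> insert x X \<Longrightarrow> b \<in> insert x X \<Longrightarrow> \<rho> b a = cnj (\<rho> a b)"
    using psd_herm[OF finI insert.prems] by blast
  have hx: "\<And>a. a \<in> X \<Longrightarrow> \<rho> a x = cnj (\<rho> x a)" using herm by blast
  define r where "r = Re (\<rho> x x)"
  have rxx: "\<rho> x x = complex_of_real r"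
    using psd_diag(1)[OF finI insert.prems xI] unfolding r_def by (simp add: complex_eq_iff)
  have r0: "r \<ge> 0" using psd_diag(2)[OF finI insert.prems xI] unfolding r_def .
  define \<rho>' where "\<rho>' a b = (if r = 0 then \<rho> a b else \<rho> a b - \<rho> a x * \<rho> x b / complex_of_real r)" for a b
  have "psd X \<rho>'"
  proof (rule psd_mono[OF insert.hyps(1,2) insert.prems])
    fix v
    let ?L = "\<Sum>b\<in>X. \<rho> x b * v b"
    define s where "s = (if r = 0 then 0 else - ?L / complex_of_real r)"
    have q: "qf (insert x X) \<rho> (\<lambda>y. if y = x then s else v y)
       = cnj s * \<rho> x x * s + cnj s * ?L + cnj ?L * s + qf X \<rho> v"
      by (rule qf_insert[where \<rho>=\<rho>, OF insert.hyps(1,2) hx])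
    have "qf X \<rho>' v = qf (insert x X) \<rho> (\<lambda>y. if y = x then s else v y)"
    proof (cases "r = 0")
      case True
      then have s0: "s = 0" unfolding s_def by simp
      have e0: "qf X \<rho>' v = qf X \<rho> v" unfolding qf_def \<rho>'_def using True by simp
      show ?thesis using q s0 e0 by simp
    next
      case False
      have "qf X \<rho>' v = qf X \<rho> v - (\<Sum>a\<in>X. \<Sum>b\<in>X. cnj (v a) * (\<rho> a x * \<rho> x b / complex_of_real r) * v b)"
        unfolding qf_def \<rho>'_def using False by (simp add: sum_subtractf algebra_simps)
      also have "(\<Sum>a\<in>X. \<Sum>b\<in>X. cnj (v a) * (\<rho> a x * \<rho> x b / complex_of_real r) * v b)
          = (\<Sum>a\<in>X. cnj (v a) * \<rho> a x) * ?L / complex_of_real r"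
        by (simp add: sum_distrib_left sum_distrib_right sum_divide_distrib mult_ac)
      also have "(\<Sum>a\<in>X. cnj (v a) * \<rho> a x) = cnj ?L"
        using hx by (simp add: mult.commute)
      finally have e1: "qf X \<rho>' v = qf X \<rho> v - cnj ?L * ?L / complex_of_real r" .
      have "cnj s * \<rho> x x * s + cnj s * ?L + cnj ?L * s = - cnj ?L * ?L / complex_of_real r"
        unfolding s_def rxx using False by (simp add: field_simps)
      then show ?thesis unfolding q e1 by simp
    qed
    then show "\<exists>s. qf X \<rho>' v = qf (insert x X) \<rho> (\<lambda>y. if y = x then s else v y)" by blast
  qed
  from insert.IH[OF this] obtain w' where w': "\<forall>a\<in>X. \<forall>b\<in>X. \<rho>' a b = (\<Sum>k\<in>X. w' k a * cnj (w' k b))" by blast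
  define u where "u a = (if r = 0 then 0 else \<rho> a x / complex_of_real (sqrt r))" for a
  define w where "w k a = (if k = x then u a else if a = x then 0 else w' k a)" for k a
  have zero_row: "\<rho> x b = 0" if "r = 0" "b \<in> insert x X" for b
    using psd_zero_diag[OF finI insert.prems xI that(2)] rxx that(1) by simp
  have uu: "u a * cnj (u b) = (if r = 0 then 0 else \<rho> a x * \<rho> x b / complex_of_real r)"
    if "a \<in> insert x X" "b \<in> insert x X" for a b
  proof (cases "r = 0")
    case False
    have "sqrt r * sqrt r = r" using r0 by simp
    then have "complex_of_real (sqrt r) * complex_of_real (sqrt r) = complex_of_real r"
      by (metis of_real_mult)
    moreover have "cnj (\<rho> b x) = \<rho> x b" using herm[OF xI that(2)] by simp
    ultimately show ?thesis using False unfolding u_def by (simp add: field_simps)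
  qed (simp add: u_def)
  show ?case
  proof (intro exI ballI)
    fix a b assume a: "a \<in> insert x X" and b: "b \<in> insert x X"
    have "(\<Sum>k\<in>insert x X. w k a * cnj (w k b)) = u a * cnj (u b) + (\<Sum>k\<in>X. w k a * cnj (w k b))"
      using insert.hyps unfolding w_def by simp
    also have "(\<Sum>k\<in>X. w k a * cnj (w k b)) = (\<Sum>k\<in>X. (if a = x then 0 else w' k a) * cnj (if b = x then 0 else w' k b))"
      by (rule sum.cong) (use insert.hyps(2) in \<open>auto simp: w_def\<close>)
    also have "\<dots> = (if a = x \<or> b = x then 0 else \<rho>' a b)"
      using w' a b by auto
    finally have e: "(\<Sum>k\<in>insert x X. w k a * cnj (w k b)) = u a * cnj (u b) + (if a = x \<or> b = x then 0 else \<rho>' a b)" .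
    show "\<rho> a b = (\<Sum>k\<in>insert x X. w k a * cnj (w k b))"
    proof (cases "r = 0")
      case True
      have "\<rho> a b = 0" if "a = x \<or> b = x"
        using that zero_row[OF True] herm a b by (metis complex_cnj_zero)
      then show ?thesis unfolding e uu[OF a b] \<rho>'_def using True by auto
    next
      case False
      have "\<rho> a b = \<rho> a x * \<rho> x b / complex_of_real r" if "a = x \<or> b = x"
        using that rxx False by auto
      then show ?thesis unfolding e uu[OF a b] \<rho>'_def using False by auto
    qed
  qed
qed

lemma ind_sum_le:
  assumes "finite A" "E \<subseteq> A" "\<forall>l\<in>E. \<not> P l"
  shows "(\<Sum>l\<in>A. if P l then 1 else 0 :: real) \<le> real (card A) - real (card E)"
proof -
  have fE: "finite E" using assms finite_subset by blast
  have "(\<Sum>l\<in>A. if P l then 1 else 0 :: real) = (\<Sum>l\<in>A - E. if P l then 1 else 0) + (\<Sum>l\<in>E. if P l then 1 else 0)"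
    using assms(2,1) by (rule sum.subset_diff)
  also have "(\<Sum>l\<in>E. if P l then 1 else 0 :: real) = 0" using assms(3) by simp
  also have "(\<Sum>l\<in>A - E. if P l then 1 else 0 :: real) \<le> real (card (A - E)) * 1"
    by (rule sum_bounded_above) simp
  also have "card (A - E) = card A - card E" using fE assms(2) by (rule card_Diff_subset)
  also have "real (card A - card E) = real (card A) - real (card E)"
    using card_mono[OF assms(1,2)] by (simp add: of_nat_diff)
  finally show ?thesis by simp
qed

lemma ind_sum_all:
  assumes "\<forall>l<N. P l"
  shows "(\<Sum>l<N. if P l then 1 else 0 :: real) = real N"
proof -
  have "(\<Sum>l<N. if P l then 1 else 0 :: real) = (\<Sum>l<N. 1)" using assms by (intro sum.cong) auto
  then show ?thesis by simp
qed

lemma ind_sum_none: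
  assumes "\<forall>l<N. \<not> P l"
  shows "(\<Sum>l<N. if P l then 1 else 0 :: real) = 0"
  using assms by (intro sum.neutral) auto

lemma ind_sum_nonneg: "(\<Sum>l<N. if P l then 1 else 0 :: real) \<ge> 0"
  by (intro sum_nonneg) auto

lemma percase2:
  fixes i :: "nat \<Rightarrow> nat"
  assumes N: "N \<ge> 1"
  shows "(real N - 1) * (if \<exists>l<N. i l = 0 then 1 else 0)
     \<ge> (\<Sum>l<N. if i l = 0 then 1 else 0) - (if \<forall>l<N. i l = 0 then 1 else 0)"
proof (cases "\<forall>l<N. i l = 0")
  case True
  have "\<exists>l<N. i l = 0" using True N by (intro exI[of _ 0]) auto
  then show ?thesis using True ind_sum_all[of N "\<lambda>l. i l = 0"] by simp
next
  case False
  then obtain l0 where l0: "l0 < N" "i l0 \<noteq> 0" by auto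
  have le: "(\<Sum>l<N. if i l = 0 then 1 else 0 :: real) \<le> real N - 1"
    using ind_sum_le[of "{..<N}" "{l0}" "\<lambda>l. i l = 0"] l0 by simp
  show ?thesis
  proof (cases "\<exists>l<N. i l = 0")
    case True
    have a: "(if \<exists>l<N. i l = 0 then 1 else 0::real) = 1" using True by (rule if_P)
    have b: "(if \<forall>l<N. i l = 0 then 1 else 0::real) = 0" using False by (rule if_not_P)
    show ?thesis unfolding a b using le by simp
  next
    case F2: False
    have a: "(if \<exists>l<N. i l = 0 then 1 else 0::real) = 0" using F2 by (rule if_not_P)
    have b: "(if \<forall>l<N. i l = 0 then 1 else 0::real) = 0" using False by (rule if_not_P)
    have c: "(\<Sum>l<N. if i l = 0 then 1 else 0 :: real) = 0" using F2 by (intro ind_sum_none) auto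
    show ?thesis unfolding a b c by simp
  qed
qed

lemma percase3:
  fixes i :: "nat \<Rightarrow> nat"
  assumes N: "N \<ge> 3"
  shows "(real N - 2) * (if \<exists>l<N. i l = 0 then 1 else 0)
     \<ge> (\<Sum>l<N. if i l = 0 then 1 else 0) - (\<Sum>l<N. if \<forall>m<N. m \<noteq> l \<longrightarrow> i m = 0 then 1 else 0)
        + (real N - 2) * (if \<forall>l<N. i l = 0 then 1 else 0)"
proof (cases "\<forall>l<N. i l = 0")
  case True
  have "\<exists>l<N. i l = 0" using True N by (intro exI[of _ 0]) auto
  moreover have "\<forall>l<N. \<forall>m<N. m \<noteq> l \<longrightarrow> i m = 0" using True by auto
  ultimately show ?thesis using True ind_sum_all[of N "\<lambda>l. i l = 0"]
      ind_sum_all[of N "\<lambda>l. \<forall>m<N. m \<noteq> l \<longrightarrow> i m = 0"] by simp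
next
  case False
  then obtain l0 where l0: "l0 < N" "i l0 \<noteq> 0" by auto
  have s2: "(\<Sum>l<N. if \<forall>m<N. m \<noteq> l \<longrightarrow> i m = 0 then 1 else 0 :: real) \<ge> 0" by (rule ind_sum_nonneg)
  show ?thesis
  proof (cases "\<exists>l<N. i l = 0")
    case F2: False
    have a: "(if \<exists>l<N. i l = 0 then 1 else 0::real) = 0" using F2 by (rule if_not_P)
    have b: "(if \<forall>l<N. i l = 0 then 1 else 0::real) = 0" using False by (rule if_not_P)
    have c: "(\<Sum>l<N. if i l = 0 then 1 else 0 :: real) = 0" using F2 by (intro ind_sum_none) auto
    show ?thesis unfolding a b c using s2 by simp
  next
    case True
    show ?thesis
    proof (cases "\<exists>l2<N. l2 \<noteq> l0 \<and> i l2 \<noteq> 0")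
      case True2: True
      then obtain l2 where l2: "l2 < N" "l2 \<noteq> l0" "i l2 \<noteq> 0" by auto
      have "(\<Sum>l<N. if i l = 0 then 1 else 0 :: real) \<le> real N - real (card {l0, l2})"
        using ind_sum_le[of "{..<N}" "{l0, l2}" "\<lambda>l. i l = 0"] l0 l2 by simp
      also have "card {l0, l2} = 2" using l2 by simp
      finally have le: "(\<Sum>l<N. if i l = 0 then 1 else 0 :: real) \<le> real N - 2" by simp
      have a: "(if \<exists>l<N. i l = 0 then 1 else 0::real) = 1" using True by (rule if_P)
      have b: "(if \<forall>l<N. i l = 0 then 1 else 0::real) = 0" using False by (rule if_not_P)
      show ?thesis unfolding a b using le s2 by simp
    next
      case F3: False
      have le: "(\<Sum>l<N. if i l = 0 then 1 else 0 :: real) \<le> real N - 1"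
        using ind_sum_le[of "{..<N}" "{l0}" "\<lambda>l. i l = 0"] l0 by simp
      have "(1::real) = (if \<forall>m<N. m \<noteq> l0 \<longrightarrow> i m = 0 then 1 else 0)" using F3 by auto
      also have "\<dots> \<le> (\<Sum>l<N. if \<forall>m<N. m \<noteq> l \<longrightarrow> i m = 0 then 1 else 0)"
        by (rule member_le_sum[of l0 "{..<N}" "\<lambda>l. if \<forall>m<N. m \<noteq> l \<longrightarrow> i m = 0 then 1 else (0::real)"]) (use l0 in auto)
      finally have ge: "1 \<le> (\<Sum>l<N. if \<forall>m<N. m \<noteq> l \<longrightarrow> i m = 0 then 1 else 0 :: real)" .
      have a: "(if \<exists>l<N. i l = 0 then 1 else 0::real) = 1" using True by (rule if_P)
      have b: "(if \<forall>l<N. i l = 0 then 1 else 0::real) = 0" using False by (rule if_not_P)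
      show ?thesis unfolding a b using le ge by simp
    qed
  qed
qed

lemma sum_swap5:
  "(\<Sum>i\<in>A. \<Sum>a\<in>B. \<Sum>b\<in>B. \<Sum>a'\<in>B. \<Sum>b'\<in>B. f i a b a' b')
   = (\<Sum>a\<in>B. \<Sum>b\<in>B. \<Sum>a'\<in>B. \<Sum>b'\<in>B. \<Sum>i\<in>A. f i a b a' b')"
proof -
  have "(\<Sum>i\<in>A. \<Sum>a\<in>B. \<Sum>b\<in>B. \<Sum>a'\<in>B. \<Sum>b'\<in>B. f i a b a' b')
     = (\<Sum>a\<in>B. \<Sum>i\<in>A. \<Sum>b\<in>B. \<Sum>a'\<in>B. \<Sum>b'\<in>B. f i a b a' b')" by (rule sum.swap)
  also have "\<dots> = (\<Sum>a\<in>B. \<Sum>b\<in>B. \<Sum>i\<in>A. \<Sum>a'\<in>B. \<Sum>b'\<in>B. f i a b a' b')"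
    by (rule sum.cong[OF refl], rule sum.swap)
  also have "\<dots> = (\<Sum>a\<in>B. \<Sum>b\<in>B. \<Sum>a'\<in>B. \<Sum>i\<in>A. \<Sum>b'\<in>B. f i a b a' b')"
    by (rule sum.cong[OF refl], rule sum.cong[OF refl], rule sum.swap)
  also have "\<dots> = (\<Sum>a\<in>B. \<Sum>b\<in>B. \<Sum>a'\<in>B. \<Sum>b'\<in>B. \<Sum>i\<in>A. f i a b a' b')"
    by (rule sum.cong[OF refl], rule sum.cong[OF refl], rule sum.cong[OF refl], rule sum.swap)
  finally show ?thesis .
qed

locale qsetup =
  fixes N :: nat and d :: "nat \<Rightarrow> nat" and \<kappa> :: "nat \<Rightarrow> real"
    and G :: "nat \<Rightarrow> nat \<Rightarrow> nat \<Rightarrow> nat \<Rightarrow> complex"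
  assumes N1: "N \<ge> 1"
    and dpos: "\<forall>l<N. d l > 0"
    and kpos: "\<forall>l<N. \<kappa> l \<ge> 1"
    and gb: "\<forall>l<N. gen_basis (d l) (\<kappa> l) (G l)"
begin

definition II where "II = PiE {..<N} (\<lambda>l. {..<(d l)\<^sup>2})"
definition JM :: "(nat \<Rightarrow> bool) \<Rightarrow> (nat \<Rightarrow> nat) set" where
  "JM M = PiE {..<N} (\<lambda>m. if M m then {..<(d m)\<^sup>2} else {0})"
definition cc :: "((nat \<Rightarrow> nat) \<Rightarrow> complex) \<Rightarrow> (nat \<Rightarrow> nat) \<Rightarrow> complex" where
  "cc \<psi> i = (\<Sum>a\<in>idx N d. \<Sum>b\<in>idx N d. \<psi> a * cnj (\<psi> b) * (\<Prod>l<N. G l (i l) (b l) (a l)))"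
definition Wt :: "(nat \<Rightarrow> nat) \<Rightarrow> real" where
  "Wt i = (\<Prod>l<N. wt (d l) (\<kappa> l) (i l))"
definition xx :: "((nat \<Rightarrow> nat) \<Rightarrow> complex) \<Rightarrow> (nat \<Rightarrow> nat) \<Rightarrow> real" where
  "xx \<psi> i = (cmod (cc \<psi> i))\<^sup>2 / Wt i"
definition Tq :: "((nat \<Rightarrow> nat) \<Rightarrow> complex) \<Rightarrow> (nat \<Rightarrow> nat) \<Rightarrow> (nat \<Rightarrow> nat) \<Rightarrow> (nat \<Rightarrow> nat) \<Rightarrow> (nat \<Rightarrow> nat) \<Rightarrow> complex" where
  "Tq \<psi> a b a' b' = \<psi> a * cnj (\<psi> b) * cnj (\<psi> a') * \<psi> b'"
definition dl :: "(nat \<Rightarrow> bool) \<Rightarrow> (nat \<Rightarrow> nat) \<Rightarrow> (nat \<Rightarrow> nat) \<Rightarrow> (nat \<Rightarrow> nat) \<Rightarrow> (nat \<Rightarrow> nat) \<Rightarrow> complex" where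
  "dl M a b a' b' = (\<Prod>m<N. if M m then (if b m = b' m \<and> a m = a' m then 1 else 0)
                                  else (if b m = a m \<and> b' m = a' m then 1 else 0))"
definition Phi :: "((nat \<Rightarrow> nat) \<Rightarrow> complex) \<Rightarrow> (nat \<Rightarrow> bool) \<Rightarrow> complex" where
  "Phi \<psi> M = (\<Sum>a\<in>idx N d. \<Sum>b\<in>idx N d. \<Sum>a'\<in>idx N d. \<Sum>b'\<in>idx N d. Tq \<psi> a b a' b' * dl M a b a' b')"
definition cM :: "(nat \<Rightarrow> bool) \<Rightarrow> real" where
  "cM M = (\<Prod>m<N. if M m then 1 else real (d m))"

lemma fin_idx: "finite (idx N d)" unfolding idx_def by (simp add: finite_PiE)
lemma fin_JM: "finite (JM M)" unfolding JM_def by (simp add: finite_PiE)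
lemma idx_lt: "a \<in> idx N d \<Longrightarrow> l < N \<Longrightarrow> a l < d l" unfolding idx_def by auto

lemma wt_pos: "l < N \<Longrightarrow> wt (d l) (\<kappa> l) j > 0"
  using dpos kpos unfolding wt_def by (auto intro: less_le_trans[of 0 1])

lemma cc_sq: "complex_of_real ((cmod (cc \<psi> i))\<^sup>2) =
   (\<Sum>a\<in>idx N d. \<Sum>b\<in>idx N d. \<Sum>a'\<in>idx N d. \<Sum>b'\<in>idx N d.
      Tq \<psi> a b a' b' * (\<Prod>l<N. G l (i l) (b l) (a l) * cnj (G l (i l) (b' l) (a' l))))"
proof -
  have "complex_of_real ((cmod (cc \<psi> i))\<^sup>2) = cc \<psi> i * cnj (cc \<psi> i)"
    by (metis complex_norm_square of_real_power)
  also have "\<dots> = (\<Sum>a\<in>idx N d. \<Sum>b\<in>idx N d. \<psi> a * cnj (\<psi> b) * (\<Prod>l<N. G l (i l) (b l) (a l)))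
     * (\<Sum>a'\<in>idx N d. \<Sum>b'\<in>idx N d. cnj (\<psi> a') * \<psi> b' * (\<Prod>l<N. cnj (G l (i l) (b' l) (a' l))))"
    unfolding cc_def by (simp add: cnj_sum cnj_prod)
  also have "\<dots> = (\<Sum>a\<in>idx N d. \<Sum>b\<in>idx N d. \<Sum>a'\<in>idx N d. \<Sum>b'\<in>idx N d.
      (\<psi> a * cnj (\<psi> b) * (\<Prod>l<N. G l (i l) (b l) (a l))) * (cnj (\<psi> a') * \<psi> b' * (\<Prod>l<N. cnj (G l (i l) (b' l) (a' l)))))"
    by (simp only: sum_distrib_right, simp only: sum_distrib_left)
  also have "\<dots> = (\<Sum>a\<in>idx N d. \<Sum>b\<in>idx N d. \<Sum>a'\<in>idx N d. \<Sum>b'\<in>idx N d.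
      Tq \<psi> a b a' b' * (\<Prod>l<N. G l (i l) (b l) (a l) * cnj (G l (i l) (b' l) (a' l))))"
    unfolding Tq_def by (simp add: prod.distrib mult_ac)
  finally show ?thesis .
qed


lemma h_sum:
  assumes l: "l < N" and a: "a \<in> idx N d" and b: "b \<in> idx N d" and a': "a' \<in> idx N d" and b': "b' \<in> idx N d"
  shows "(\<Sum>j\<in>(if M l then {..<(d l)\<^sup>2} else {0}). G l j (b l) (a l) * cnj (G l j (b' l) (a' l)) / complex_of_real (wt (d l) (\<kappa> l) j))
     = (if M l then (if b l = b' l \<and> a l = a' l then 1 else 0) else (if b l = a l \<and> b' l = a' l then 1 else 0))
       / complex_of_real (if M l then 1 else real (d l))"
proof (cases "M l")
  case True
  have k0: "\<kappa> l > 0" using kpos l by (auto intro: less_le_trans[of 0 1])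
  show ?thesis using True gen_basis_complete[OF gb[rule_format, OF l] dpos[rule_format, OF l] k0
      idx_lt[OF b l] idx_lt[OF a l] idx_lt[OF b' l] idx_lt[OF a' l]] by simp
next
  case False
  have G0: "\<forall>x<d l. \<forall>y<d l. G l 0 x y = (if x = y then 1 else 0)"
    using gb l unfolding gen_basis_def by blast
  show ?thesis using False G0 idx_lt[OF b l] idx_lt[OF a l] idx_lt[OF b' l] idx_lt[OF a' l]
    by (simp add: wt_def)
qed

lemma sum_JM: "(\<Sum>i\<in>JM M. complex_of_real (xx \<psi> i)) = Phi \<psi> M / complex_of_real (cM M)"
proof -
  define h where "h a b a' b' l j = G l j (b l) (a l) * cnj (G l j (b' l) (a' l)) / complex_of_real (wt (d l) (\<kappa> l) j)"
    for a b a' b' :: "nat \<Rightarrow> nat" and l j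
  have x1: "complex_of_real (xx \<psi> i) = (\<Sum>a\<in>idx N d. \<Sum>b\<in>idx N d. \<Sum>a'\<in>idx N d. \<Sum>b'\<in>idx N d.
      Tq \<psi> a b a' b' * (\<Prod>l<N. h a b a' b' l (i l)))" for i
  proof -
    have w: "complex_of_real (Wt i) = (\<Prod>l<N. complex_of_real (wt (d l) (\<kappa> l) (i l)))"
      unfolding Wt_def by simp
    have "complex_of_real (xx \<psi> i) = complex_of_real ((cmod (cc \<psi> i))\<^sup>2) / complex_of_real (Wt i)"
      unfolding xx_def by simp
    also have "\<dots> = (\<Sum>a\<in>idx N d. \<Sum>b\<in>idx N d. \<Sum>a'\<in>idx N d. \<Sum>b'\<in>idx N d.
      Tq \<psi> a b a' b' * ((\<Prod>l<N. G l (i l) (b l) (a l) * cnj (G l (i l) (b' l) (a' l))) / complex_of_real (Wt i)))"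
      unfolding cc_sq by (simp add: sum_divide_distrib)
    also have "\<dots> = (\<Sum>a\<in>idx N d. \<Sum>b\<in>idx N d. \<Sum>a'\<in>idx N d. \<Sum>b'\<in>idx N d.
      Tq \<psi> a b a' b' * (\<Prod>l<N. h a b a' b' l (i l)))"
      unfolding w h_def by (simp add: prod_dividef)
    finally show ?thesis .
  qed
  have "(\<Sum>i\<in>JM M. complex_of_real (xx \<psi> i)) = (\<Sum>i\<in>JM M. \<Sum>a\<in>idx N d. \<Sum>b\<in>idx N d. \<Sum>a'\<in>idx N d. \<Sum>b'\<in>idx N d.
      Tq \<psi> a b a' b' * (\<Prod>l<N. h a b a' b' l (i l)))" unfolding x1 ..
  also have "\<dots> = (\<Sum>a\<in>idx N d. \<Sum>b\<in>idx N d. \<Sum>a'\<in>idx N d. \<Sum>b'\<in>idx N d. \<Sum>i\<in>JM M.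
      Tq \<psi> a b a' b' * (\<Prod>l<N. h a b a' b' l (i l)))" by (rule sum_swap5)
  also have "\<dots> = (\<Sum>a\<in>idx N d. \<Sum>b\<in>idx N d. \<Sum>a'\<in>idx N d. \<Sum>b'\<in>idx N d.
      Tq \<psi> a b a' b' * (dl M a b a' b' / complex_of_real (cM M)))"
  proof (intro sum.cong refl)
    fix a b a' b' assume a: "a \<in> idx N d" and b: "b \<in> idx N d" and a': "a' \<in> idx N d" and b': "b' \<in> idx N d"
    have "(\<Sum>i\<in>JM M. Tq \<psi> a b a' b' * (\<Prod>l<N. h a b a' b' l (i l)))
        = Tq \<psi> a b a' b' * (\<Sum>i\<in>JM M. \<Prod>l<N. h a b a' b' l (i l))" by (simp add: sum_distrib_left)
    also have "(\<Sum>i\<in>JM M. \<Prod>l<N. h a b a' b' l (i l))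
        = (\<Prod>l<N. \<Sum>j\<in>(if M l then {..<(d l)\<^sup>2} else {0}). h a b a' b' l j)"
      unfolding JM_def by (rule prod_sum_PiE[symmetric]) auto
    also have "\<dots> = (\<Prod>l<N. (if M l then (if b l = b' l \<and> a l = a' l then 1 else 0) else (if b l = a l \<and> b' l = a' l then 1 else 0))
       / complex_of_real (if M l then 1 else real (d l)))"
      unfolding h_def by (intro prod.cong refl h_sum) (use a b a' b' in auto)
    also have "\<dots> = dl M a b a' b' / complex_of_real (cM M)"
      unfolding dl_def cM_def by (simp add: prod_dividef)
    finally show "(\<Sum>i\<in>JM M. Tq \<psi> a b a' b' * (\<Prod>l<N. h a b a' b' l (i l))) = Tq \<psi> a b a' b' * (dl M a b a' b' / complex_of_real (cM M))" .
  qed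
  also have "\<dots> = Phi \<psi> M / complex_of_real (cM M)"
    unfolding Phi_def by (simp add: sum_divide_distrib)
  finally show ?thesis .
qed


lemma Phi_neg: "Phi \<psi> (\<lambda>m. \<not> M m) = Phi \<psi> M"
proof -
  have pt: "Tq \<psi> a b a' b' * dl (\<lambda>m. \<not> M m) a b a' b' = Tq \<psi> a a' b b' * dl M a a' b b'" for a b a' b'
  proof -
    have "Tq \<psi> a b a' b' = Tq \<psi> a a' b b'" unfolding Tq_def by (simp add: mult_ac)
    moreover have "dl (\<lambda>m. \<not> M m) a b a' b' = dl M a a' b b'"
      unfolding dl_def by (intro prod.cong refl) auto
    ultimately show ?thesis by simp
  qed
  have "Phi \<psi> (\<lambda>m. \<not> M m) = (\<Sum>a\<in>idx N d. \<Sum>b\<in>idx N d. \<Sum>a'\<in>idx N d. \<Sum>b'\<in>idx N d. Tq \<psi> a a' b b' * dl M a a' b b')"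
    unfolding Phi_def pt ..
  also have "\<dots> = (\<Sum>a\<in>idx N d. \<Sum>a'\<in>idx N d. \<Sum>b\<in>idx N d. \<Sum>b'\<in>idx N d. Tq \<psi> a a' b b' * dl M a a' b b')"
    by (rule sum.cong[OF refl], rule sum.swap)
  also have "\<dots> = Phi \<psi> M" unfolding Phi_def ..
  finally show ?thesis .
qed

lemma prod_ind: "(\<Prod>m<N. if P m then 1 else 0 :: complex) = (if \<forall>m<N. P m then 1 else 0)"
proof (cases "\<forall>m<N. P m")
  case True then show ?thesis by simp
next
  case False
  then obtain m where "m < N" "\<not> P m" by auto
  then have "(\<Prod>m<N. if P m then 1 else 0 :: complex) = 0" by (subst prod_zero_iff) auto
  then show ?thesis using False by simp
qed

lemma idx_eq: "a \<in> idx N d \<Longrightarrow> a' \<in> idx N d \<Longrightarrow> (\<forall>m<N. a m = a' m) \<longleftrightarrow> a = a'"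
  unfolding idx_def using PiE_ext by (metis lessThan_iff)

lemma Phi_true: "Phi \<psi> (\<lambda>_. True) = complex_of_real ((\<Sum>a\<in>idx N d. (cmod (\<psi> a))\<^sup>2)\<^sup>2)"
proof -
  have dlt: "dl (\<lambda>_. True) a b a' b' = (if b = b' \<and> a = a' then 1 else 0)"
    if "a \<in> idx N d" "b \<in> idx N d" "a' \<in> idx N d" "b' \<in> idx N d" for a b a' b'
  proof -
    have "dl (\<lambda>_. True) a b a' b' = (if \<forall>m<N. b m = b' m \<and> a m = a' m then 1 else 0)"
      unfolding dl_def by (simp add: prod_ind)
    also have "(\<forall>m<N. b m = b' m \<and> a m = a' m) = (b = b' \<and> a = a')"
      using idx_eq[of b b'] idx_eq[of a a'] that by blast
    finally show ?thesis .
  qed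
  have "Phi \<psi> (\<lambda>_. True) = (\<Sum>a\<in>idx N d. \<Sum>b\<in>idx N d. \<Sum>a'\<in>idx N d. \<Sum>b'\<in>idx N d.
       Tq \<psi> a b a' b' * (if b = b' \<and> a = a' then 1 else 0))"
    unfolding Phi_def by (intro sum.cong refl) (simp add: dlt)
  also have "\<dots> = (\<Sum>a\<in>idx N d. \<Sum>b\<in>idx N d. Tq \<psi> a b a b)"
  proof (intro sum.cong refl)
    fix a b assume a: "a \<in> idx N d" and b: "b \<in> idx N d"
    have "(\<Sum>a'\<in>idx N d. \<Sum>b'\<in>idx N d. Tq \<psi> a b a' b' * (if b = b' \<and> a = a' then 1 else 0))
        = (\<Sum>a'\<in>idx N d. if a = a' then Tq \<psi> a b a' b else 0)"
    proof (intro sum.cong refl)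
      fix a' assume "a' \<in> idx N d"
      have "(\<Sum>b'\<in>idx N d. Tq \<psi> a b a' b' * (if b = b' \<and> a = a' then 1 else 0))
          = (\<Sum>b'\<in>idx N d. if b = b' then (if a = a' then Tq \<psi> a b a' b' else 0) else 0)"
        by (intro sum.cong refl) auto
      also have "\<dots> = (if a = a' then Tq \<psi> a b a' b else 0)" using b fin_idx by simp
      finally show "(\<Sum>b'\<in>idx N d. Tq \<psi> a b a' b' * (if b = b' \<and> a = a' then 1 else 0)) = (if a = a' then Tq \<psi> a b a' b else 0)" .
    qed
    also have "\<dots> = Tq \<psi> a b a b" using a fin_idx by simp
    finally show "(\<Sum>a'\<in>idx N d. \<Sum>b'\<in>idx N d. Tq \<psi> a b a' b' * (if b = b' \<and> a = a' then 1 else 0)) = Tq \<psi> a b a b" .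
  qed
  also have "\<dots> = (\<Sum>a\<in>idx N d. \<psi> a * cnj (\<psi> a)) * (\<Sum>b\<in>idx N d. \<psi> b * cnj (\<psi> b))"
    unfolding Tq_def by (simp add: sum_product mult_ac)
  also have "(\<Sum>a\<in>idx N d. \<psi> a * cnj (\<psi> a)) = complex_of_real (\<Sum>a\<in>idx N d. (cmod (\<psi> a))\<^sup>2)"
    unfolding of_real_sum by (intro sum.cong refl) (metis complex_norm_square of_real_power)
  finally show ?thesis by (simp add: power2_eq_square)
qed

lemma Phi_false: "Phi \<psi> (\<lambda>_. False) = complex_of_real ((\<Sum>a\<in>idx N d. (cmod (\<psi> a))\<^sup>2)\<^sup>2)"
  using Phi_neg[where \<psi>=\<psi> and M="\<lambda>_. True"] Phi_true by simp

lemma JM_char: "JM M = {i \<in> II. \<forall>m<N. \<not> M m \<longrightarrow> i m = 0}"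
  unfolding JM_def II_def using dpos apply (auto simp: PiE_iff extensional_def split: if_splits)
  by (metis lessThan_iff zero_less_power)

lemma cM_pos: "cM M > 0" unfolding cM_def using dpos by (intro prod_pos) auto

lemma real_JM: "(\<Sum>i\<in>JM M. xx \<psi> i) * cM M = Re (Phi \<psi> M)"
proof -
  have "complex_of_real ((\<Sum>i\<in>JM M. xx \<psi> i) * cM M) = Phi \<psi> M"
    using sum_JM[where M=M and \<psi>=\<psi>] cM_pos[where M=M] by (simp add: field_simps)
  then show ?thesis by (metis Re_complex_of_real)
qed


definition DD where "DD = (\<Prod>l<N. real (d l))"
definition KK where "KK = (\<Prod>l<N. \<kappa> l)"
definition R where "R \<psi> M = (\<Sum>i\<in>JM M. xx \<psi> i)"
definition nn where "nn \<psi> = (\<Sum>a\<in>idx N d. (cmod (\<psi> a))\<^sup>2)"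

lemma fin_II: "finite II" unfolding II_def by (simp add: finite_PiE)

lemma Wt_pos: "Wt i > 0" unfolding Wt_def using wt_pos by (intro prod_pos) auto

lemma xx_nonneg: "xx \<psi> i \<ge> 0" unfolding xx_def using Wt_pos[of i] by simp

lemma DD_pos: "DD > 0" unfolding DD_def using dpos by (intro prod_pos) auto

lemma R_true: "R \<psi> (\<lambda>_. True) = (nn \<psi>)\<^sup>2"
proof -
  have "cM (\<lambda>_. True) = 1" unfolding cM_def by simp
  then show ?thesis using real_JM[where M="\<lambda>_. True" and \<psi>=\<psi>] Phi_true[of \<psi>]
    unfolding R_def nn_def by simp
qed

lemma R_false: "R \<psi> (\<lambda>_. False) * DD = (nn \<psi>)\<^sup>2"
proof -
  have "cM (\<lambda>_. False) = DD" unfolding cM_def DD_def by simp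
  then show ?thesis using real_JM[where M="\<lambda>_. False" and \<psi>=\<psi>] Phi_false[of \<psi>]
    unfolding R_def nn_def by simp
qed

lemma cM_ne: "l < N \<Longrightarrow> cM (\<lambda>m. m \<noteq> l) = real (d l)"
proof -
  assume l: "l < N"
  have "cM (\<lambda>m. m \<noteq> l) = (\<Prod>m<N. if m = l then real (d m) else 1)"
    unfolding cM_def by (intro prod.cong refl) auto
  also have "\<dots> = real (d l)" using l by simp
  finally show ?thesis .
qed

lemma cM_eq: "l < N \<Longrightarrow> cM (\<lambda>m. m = l) * real (d l) = DD"
proof -
  assume l: "l < N"
  have "DD = real (d l) * (\<Prod>m\<in>{..<N} - {l}. real (d m))"
    unfolding DD_def using l by (simp add: prod.remove)
  moreover have "cM (\<lambda>m. m = l) = 1 * (\<Prod>m\<in>{..<N} - {l}. (if m = l then 1 else real (d m)))"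
    unfolding cM_def using l by (subst prod.remove[of _ l]) auto
  moreover have "(\<Prod>m\<in>{..<N} - {l}. (if m = l then 1 else real (d m))) = (\<Prod>m\<in>{..<N} - {l}. real (d m))"
    by (intro prod.cong refl) auto
  ultimately show ?thesis by simp
qed

lemma R_rel: "l < N \<Longrightarrow> R \<psi> (\<lambda>m. m \<noteq> l) * real (d l) * real (d l) = R \<psi> (\<lambda>m. m = l) * DD"
proof -
  assume l: "l < N"
  have ph: "Phi \<psi> (\<lambda>m. m \<noteq> l) = Phi \<psi> (\<lambda>m. m = l)"
    using Phi_neg[where \<psi>=\<psi> and M="\<lambda>m. m = l"] by simp
  have e1: "R \<psi> (\<lambda>m. m \<noteq> l) * real (d l) = Re (Phi \<psi> (\<lambda>m. m \<noteq> l))"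
    using real_JM[where M="\<lambda>m. m \<noteq> l" and \<psi>=\<psi>] unfolding R_def cM_ne[OF l] .
  have e2: "R \<psi> (\<lambda>m. m = l) * cM (\<lambda>m. m = l) = Re (Phi \<psi> (\<lambda>m. m = l))"
    using real_JM[where M="\<lambda>m. m = l" and \<psi>=\<psi>] unfolding R_def .
  have "R \<psi> (\<lambda>m. m \<noteq> l) * real (d l) * real (d l) = R \<psi> (\<lambda>m. m = l) * cM (\<lambda>m. m = l) * real (d l)"
    using e1 e2 ph by simp
  also have "\<dots> = R \<psi> (\<lambda>m. m = l) * DD" using cM_eq[OF l] by (simp add: mult.assoc)
  finally show ?thesis .
qed

lemma JM_ne: "l < N \<Longrightarrow> JM (\<lambda>m. m \<noteq> l) = {i \<in> II. i l = 0}"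
  unfolding JM_char by auto
lemma JM_eq: "JM (\<lambda>m. m = l) = {i \<in> II. \<forall>m<N. m \<noteq> l \<longrightarrow> i m = 0}"
  unfolding JM_char by auto
lemma JM_false: "JM (\<lambda>_. False) = {i \<in> II. \<forall>m<N. i m = 0}"
  unfolding JM_char by auto
lemma JM_true: "JM (\<lambda>_. True) = II"
  unfolding JM_char by auto

lemma corr_mem: "i \<in> corr_idx N d \<longleftrightarrow> i \<in> II \<and> (\<forall>l<N. i l \<noteq> 0)"
proof -
  have e: "\<And>k n. ((k::nat) \<in> {1..<n}) = (k \<in> {..<n} \<and> k \<noteq> 0)" by auto
  show ?thesis unfolding corr_idx_def II_def PiE_iff e by blast
qed

lemma corr_char: "corr_idx N d = {i \<in> II. \<forall>l<N. i l \<noteq> 0}"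
  by (simp add: set_eq_iff corr_mem)

lemma sum_ind: "(\<Sum>i\<in>II. (if P i then 1 else 0) * xx \<psi> i) = (\<Sum>i\<in>{i\<in>II. P i}. xx \<psi> i)"
proof -
  have "(\<Sum>i\<in>II. (if P i then 1 else 0) * xx \<psi> i) = (\<Sum>i\<in>II. if P i then xx \<psi> i else 0)"
    by (intro sum.cong refl) simp
  also have "\<dots> = (\<Sum>i\<in>{i\<in>II. P i}. xx \<psi> i)" by (rule sum.inter_filter[symmetric, OF fin_II])
  finally show ?thesis .
qed

lemma R_beta_ge: "R \<psi> (\<lambda>m. m = l) \<ge> R \<psi> (\<lambda>_. False)"
  unfolding R_def JM_eq JM_false
  by (rule sum_mono2) (use fin_II xx_nonneg in auto)

end

context qsetup begin

definition CC where "CC \<psi> = (\<Sum>i\<in>corr_idx N d. xx \<psi> i)"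

lemma sum_weighted:
  assumes "\<And>i. i \<in> II \<Longrightarrow> p i \<ge> q i"
  shows "(\<Sum>i\<in>II. p i * xx \<psi> i) \<ge> (\<Sum>i\<in>II. q i * xx \<psi> i)"
  by (rule sum_mono) (use assms xx_nonneg in \<open>auto intro: mult_right_mono\<close>)

lemma S1: "(\<Sum>i\<in>II. (if \<exists>l<N. i l = 0 then 1 else 0) * xx \<psi> i) = R \<psi> (\<lambda>_. True) - CC \<psi>"
proof -
  have "(\<Sum>i\<in>II. (if \<exists>l<N. i l = 0 then 1 else 0) * xx \<psi> i)
      = (\<Sum>i\<in>II. xx \<psi> i - (if \<forall>l<N. i l \<noteq> 0 then 1 else 0) * xx \<psi> i)"
    by (intro sum.cong refl) auto
  also have "\<dots> = (\<Sum>i\<in>II. xx \<psi> i) - (\<Sum>i\<in>II. (if \<forall>l<N. i l \<noteq> 0 then 1 else 0) * xx \<psi> i)"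
    by (rule sum_subtractf)
  also have "(\<Sum>i\<in>II. (if \<forall>l<N. i l \<noteq> 0 then 1 else 0) * xx \<psi> i) = CC \<psi>"
    unfolding sum_ind CC_def corr_char ..
  finally show ?thesis unfolding R_def JM_true .
qed

lemma S2: "(\<Sum>i\<in>II. (\<Sum>l<N. if i l = 0 then 1 else 0) * xx \<psi> i) = (\<Sum>l<N. R \<psi> (\<lambda>m. m \<noteq> l))"
proof -
  have "(\<Sum>i\<in>II. (\<Sum>l<N. if i l = 0 then 1 else 0) * xx \<psi> i) = (\<Sum>i\<in>II. \<Sum>l<N. (if i l = 0 then 1 else 0) * xx \<psi> i)"
    by (simp add: sum_distrib_right)
  also have "\<dots> = (\<Sum>l<N. \<Sum>i\<in>II. (if i l = 0 then 1 else 0) * xx \<psi> i)" by (rule sum.swap)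
  also have "\<dots> = (\<Sum>l<N. R \<psi> (\<lambda>m. m \<noteq> l))"
    by (intro sum.cong refl) (simp add: sum_ind R_def JM_ne)
  finally show ?thesis .
qed

lemma S3: "(\<Sum>i\<in>II. (if \<forall>l<N. i l = 0 then 1 else 0) * xx \<psi> i) = R \<psi> (\<lambda>_. False)"
  unfolding sum_ind R_def JM_false ..

lemma S4: "(\<Sum>i\<in>II. (\<Sum>l<N. if \<forall>m<N. m \<noteq> l \<longrightarrow> i m = 0 then 1 else 0) * xx \<psi> i) = (\<Sum>l<N. R \<psi> (\<lambda>m. m = l))"
proof -
  have "(\<Sum>i\<in>II. (\<Sum>l<N. if \<forall>m<N. m \<noteq> l \<longrightarrow> i m = 0 then 1 else 0) * xx \<psi> i)
      = (\<Sum>i\<in>II. \<Sum>l<N. (if \<forall>m<N. m \<noteq> l \<longrightarrow> i m = 0 then 1 else 0) * xx \<psi> i)"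
    by (simp add: sum_distrib_right)
  also have "\<dots> = (\<Sum>l<N. \<Sum>i\<in>II. (if \<forall>m<N. m \<noteq> l \<longrightarrow> i m = 0 then 1 else 0) * xx \<psi> i)" by (rule sum.swap)
  also have "\<dots> = (\<Sum>l<N. R \<psi> (\<lambda>m. m = l))"
    by (intro sum.cong refl) (simp only: sum_ind R_def JM_eq)
  finally show ?thesis .
qed

lemma ineq2: "(real N - 1) * (R \<psi> (\<lambda>_. True) - CC \<psi>) \<ge> (\<Sum>l<N. R \<psi> (\<lambda>m. m \<noteq> l)) - R \<psi> (\<lambda>_. False)"
proof -
  have "(\<Sum>i\<in>II. ((real N - 1) * (if \<exists>l<N. i l = 0 then 1 else 0)) * xx \<psi> i)
     \<ge> (\<Sum>i\<in>II. ((\<Sum>l<N. if i l = 0 then 1 else 0) - (if \<forall>l<N. i l = 0 then 1 else 0)) * xx \<psi> i)"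
    by (rule sum_weighted) (rule percase2[OF N1])
  also have "(\<Sum>i\<in>II. ((\<Sum>l<N. if i l = 0 then 1 else 0) - (if \<forall>l<N. i l = 0 then 1 else 0)) * xx \<psi> i)
     = (\<Sum>i\<in>II. (\<Sum>l<N. if i l = 0 then 1 else 0) * xx \<psi> i) - (\<Sum>i\<in>II. (if \<forall>l<N. i l = 0 then 1 else 0) * xx \<psi> i)"
    by (simp add: left_diff_distrib sum_subtractf)
  also have "(\<Sum>i\<in>II. ((real N - 1) * (if \<exists>l<N. i l = 0 then 1 else 0)) * xx \<psi> i)
     = (real N - 1) * (\<Sum>i\<in>II. (if \<exists>l<N. i l = 0 then 1 else 0) * xx \<psi> i)"
    by (simp add: sum_distrib_left mult.assoc)
  finally show ?thesis unfolding S1 S2 S3 .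
qed

lemma ineq3:
  assumes N3: "N \<ge> 3"
  shows "(real N - 2) * (R \<psi> (\<lambda>_. True) - CC \<psi>) \<ge>
     (\<Sum>l<N. R \<psi> (\<lambda>m. m \<noteq> l)) - (\<Sum>l<N. R \<psi> (\<lambda>m. m = l)) + (real N - 2) * R \<psi> (\<lambda>_. False)"
proof -
  have "(\<Sum>i\<in>II. ((real N - 2) * (if \<exists>l<N. i l = 0 then 1 else 0)) * xx \<psi> i)
     \<ge> (\<Sum>i\<in>II. ((\<Sum>l<N. if i l = 0 then 1 else 0) - (\<Sum>l<N. if \<forall>m<N. m \<noteq> l \<longrightarrow> i m = 0 then 1 else 0)
        + (real N - 2) * (if \<forall>l<N. i l = 0 then 1 else 0)) * xx \<psi> i)"
    by (rule sum_weighted) (rule percase3[OF N3])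
  also have "(\<Sum>i\<in>II. ((\<Sum>l<N. if i l = 0 then 1 else 0) - (\<Sum>l<N. if \<forall>m<N. m \<noteq> l \<longrightarrow> i m = 0 then 1 else 0)
        + (real N - 2) * (if \<forall>l<N. i l = 0 then 1 else 0)) * xx \<psi> i)
     = (\<Sum>i\<in>II. (\<Sum>l<N. if i l = 0 then 1 else 0) * xx \<psi> i)
       - (\<Sum>i\<in>II. (\<Sum>l<N. if \<forall>m<N. m \<noteq> l \<longrightarrow> i m = 0 then 1 else 0) * xx \<psi> i)
       + (real N - 2) * (\<Sum>i\<in>II. (if \<forall>l<N. i l = 0 then 1 else 0) * xx \<psi> i)"
    by (simp add: algebra_simps sum_subtractf sum.distrib sum_distrib_left)
  also have "(\<Sum>i\<in>II. ((real N - 2) * (if \<exists>l<N. i l = 0 then 1 else 0)) * xx \<psi> i)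
     = (real N - 2) * (\<Sum>i\<in>II. (if \<exists>l<N. i l = 0 then 1 else 0) * xx \<psi> i)"
    by (simp add: sum_distrib_left mult.assoc)
  finally show ?thesis unfolding S1 S2 S3 S4 .
qed

lemma ineq1: "R \<psi> (\<lambda>_. True) - CC \<psi> \<ge> R \<psi> (\<lambda>_. False)"
proof -
  have "R \<psi> (\<lambda>_. False) = (\<Sum>i\<in>{i\<in>II. \<forall>m<N. i m = 0}. xx \<psi> i)" unfolding R_def JM_false ..
  also have "\<dots> \<le> (\<Sum>i\<in>{i\<in>II. \<exists>l<N. i l = 0}. xx \<psi> i)"
    by (rule sum_mono2) (use fin_II xx_nonneg N1 in \<open>auto intro: exI[of _ 0]\<close>)
  also have "\<dots> = R \<psi> (\<lambda>_. True) - CC \<psi>" using S1[of \<psi>] unfolding sum_ind .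
  finally show ?thesis .
qed


definition SS where "SS = (\<Sum>l<N. 1 / (real (d l))\<^sup>2)"

lemma dl_pos: "l < N \<Longrightarrow> real (d l) > 0" using dpos by simp

lemma X0_eq: "R \<psi> (\<lambda>_. False) = (nn \<psi>)\<^sup>2 / DD"
  using R_false[of \<psi>] DD_pos by (simp add: field_simps)

lemma alpha_ge: "l < N \<Longrightarrow> R \<psi> (\<lambda>m. m \<noteq> l) \<ge> (nn \<psi>)\<^sup>2 / (real (d l))\<^sup>2"
proof -
  assume l: "l < N"
  have "R \<psi> (\<lambda>m. m \<noteq> l) * (real (d l))\<^sup>2 = R \<psi> (\<lambda>m. m = l) * DD"
    using R_rel[OF l, of \<psi>] by (simp add: power2_eq_square mult.assoc)
  also have "\<dots> \<ge> R \<psi> (\<lambda>_. False) * DD"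
    using R_beta_ge[of \<psi> l] DD_pos by (simp add: mult_right_mono)
  also have "R \<psi> (\<lambda>_. False) * DD = (nn \<psi>)\<^sup>2" by (rule R_false)
  finally show ?thesis using dl_pos[OF l] by (simp add: field_simps)
qed

lemma ab_ge:
  assumes l: "l < N" and big: "(real (d l))\<^sup>2 \<le> DD"
  shows "R \<psi> (\<lambda>m. m \<noteq> l) - R \<psi> (\<lambda>m. m = l) \<ge> (nn \<psi>)\<^sup>2 / (real (d l))\<^sup>2 - (nn \<psi>)\<^sup>2 / DD"
proof -
  have d2: "(real (d l))\<^sup>2 > 0" using dl_pos[OF l] by simp
  have al: "R \<psi> (\<lambda>m. m \<noteq> l) = R \<psi> (\<lambda>m. m = l) * (DD / (real (d l))\<^sup>2)"
  proof -
    have ne: "(real (d l))\<^sup>2 \<noteq> 0" using d2 by simp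
    have "R \<psi> (\<lambda>m. m \<noteq> l) * (real (d l))\<^sup>2 = R \<psi> (\<lambda>m. m = l) * DD"
      using R_rel[OF l, of \<psi>] by (simp add: power2_eq_square mult.assoc)
    then show ?thesis using ne by (simp add: field_simps)
  qed
  have f: "DD / (real (d l))\<^sup>2 - 1 \<ge> 0" using big d2 by (simp add: field_simps)
  have "R \<psi> (\<lambda>m. m \<noteq> l) - R \<psi> (\<lambda>m. m = l) = R \<psi> (\<lambda>m. m = l) * (DD / (real (d l))\<^sup>2 - 1)"
    unfolding al by (simp add: algebra_simps)
  also have "\<dots> \<ge> R \<psi> (\<lambda>_. False) * (DD / (real (d l))\<^sup>2 - 1)"
    using R_beta_ge[of \<psi> l] f by (rule mult_right_mono)
  also have "R \<psi> (\<lambda>_. False) * (DD / (real (d l))\<^sup>2 - 1) = (nn \<psi>)\<^sup>2 / (real (d l))\<^sup>2 - (nn \<psi>)\<^sup>2 / DD"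
    unfolding X0_eq using DD_pos d2 by (simp add: field_simps)
  finally show ?thesis .
qed

lemma pure1: "N = 1 \<Longrightarrow> DD * CC \<psi> \<le> (DD - 1) * (nn \<psi>)\<^sup>2"
proof -
  have h: "(nn \<psi>)\<^sup>2 - CC \<psi> \<ge> (nn \<psi>)\<^sup>2 / DD" using ineq1[of \<psi>] unfolding R_true X0_eq .
  have "DD * ((nn \<psi>)\<^sup>2 - CC \<psi>) \<ge> DD * ((nn \<psi>)\<^sup>2 / DD)" using h DD_pos by (intro mult_left_mono) auto
  moreover have "DD * ((nn \<psi>)\<^sup>2 / DD) = (nn \<psi>)\<^sup>2" using DD_pos by simp
  ultimately have "DD * ((nn \<psi>)\<^sup>2 - CC \<psi>) \<ge> (nn \<psi>)\<^sup>2" by simp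
  then show ?thesis using DD_pos by (simp add: algebra_simps)
qed

lemma pure2:
  assumes N2: "N \<ge> 2"
  shows "DD * CC \<psi> \<le> (DD + 1 / (real N - 1) - DD / (real N - 1) * SS) * (nn \<psi>)\<^sup>2"
proof -
  define k where "k = real N - 1"
  have k: "k > 0" using N2 unfolding k_def by simp
  have "(\<Sum>l<N. R \<psi> (\<lambda>m. m \<noteq> l)) \<ge> (\<Sum>l<N. (nn \<psi>)\<^sup>2 / (real (d l))\<^sup>2)"
    by (rule sum_mono) (simp add: alpha_ge)
  also have "(\<Sum>l<N. (nn \<psi>)\<^sup>2 / (real (d l))\<^sup>2) = (nn \<psi>)\<^sup>2 * SS"
    unfolding SS_def by (simp add: sum_distrib_left)
  finally have sa: "(\<Sum>l<N. R \<psi> (\<lambda>m. m \<noteq> l)) \<ge> (nn \<psi>)\<^sup>2 * SS" .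
  have h: "k * ((nn \<psi>)\<^sup>2 - CC \<psi>) \<ge> (nn \<psi>)\<^sup>2 * SS - (nn \<psi>)\<^sup>2 / DD"
    using ineq2[of \<psi>] sa unfolding R_true X0_eq k_def by linarith
  have id: "(DD + 1 / k - DD / k * SS) * (nn \<psi>)\<^sup>2 - DD * CC \<psi>
      = (DD / k) * (k * ((nn \<psi>)\<^sup>2 - CC \<psi>) - ((nn \<psi>)\<^sup>2 * SS - (nn \<psi>)\<^sup>2 / DD))"
    using k DD_pos by (simp add: field_simps)
  have "(DD / k) * (k * ((nn \<psi>)\<^sup>2 - CC \<psi>) - ((nn \<psi>)\<^sup>2 * SS - (nn \<psi>)\<^sup>2 / DD)) \<ge> 0"
    using h k DD_pos by (intro mult_nonneg_nonneg) auto
  then show ?thesis using id unfolding k_def by linarith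
qed

lemma pure3:
  assumes N3: "N \<ge> 3" and big: "\<forall>l<N. (real (d l))\<^sup>2 \<le> DD"
  shows "DD * CC \<psi> \<le> (DD + 2 / (real N - 2) - DD / (real N - 2) * SS) * (nn \<psi>)\<^sup>2"
proof -
  define k where "k = real N - 2"
  have k: "k > 0" using N3 unfolding k_def by simp
  have "(\<Sum>l<N. R \<psi> (\<lambda>m. m \<noteq> l) - R \<psi> (\<lambda>m. m = l)) \<ge> (\<Sum>l<N. (nn \<psi>)\<^sup>2 / (real (d l))\<^sup>2 - (nn \<psi>)\<^sup>2 / DD)"
    by (rule sum_mono) (simp add: ab_ge big)
  also have "(\<Sum>l<N. (nn \<psi>)\<^sup>2 / (real (d l))\<^sup>2 - (nn \<psi>)\<^sup>2 / DD) = (nn \<psi>)\<^sup>2 * SS - real N * ((nn \<psi>)\<^sup>2 / DD)"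
    unfolding SS_def by (simp add: sum_subtractf sum_distrib_left)
  finally have sa: "(\<Sum>l<N. R \<psi> (\<lambda>m. m \<noteq> l)) - (\<Sum>l<N. R \<psi> (\<lambda>m. m = l)) \<ge> (nn \<psi>)\<^sup>2 * SS - real N * ((nn \<psi>)\<^sup>2 / DD)"
    by (simp add: sum_subtractf)
  have h0: "k * ((nn \<psi>)\<^sup>2 - CC \<psi>) \<ge> (nn \<psi>)\<^sup>2 * SS - real N * ((nn \<psi>)\<^sup>2 / DD) + k * ((nn \<psi>)\<^sup>2 / DD)"
    using ineq3[OF N3, of \<psi>] sa unfolding R_true X0_eq k_def by linarith
  have "real N * ((nn \<psi>)\<^sup>2 / DD) - k * ((nn \<psi>)\<^sup>2 / DD) = 2 * ((nn \<psi>)\<^sup>2 / DD)"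
  proof -
    have g: "\<And>x::real. real N * x - (real N - 2) * x = 2 * x" by (simp add: algebra_simps)
    show ?thesis unfolding k_def by (rule g)
  qed
  with h0 have h: "k * ((nn \<psi>)\<^sup>2 - CC \<psi>) \<ge> (nn \<psi>)\<^sup>2 * SS - 2 * ((nn \<psi>)\<^sup>2 / DD)" by linarith
  have id: "(DD + 2 / k - DD / k * SS) * (nn \<psi>)\<^sup>2 - DD * CC \<psi>
      = (DD / k) * (k * ((nn \<psi>)\<^sup>2 - CC \<psi>) - ((nn \<psi>)\<^sup>2 * SS - 2 * ((nn \<psi>)\<^sup>2 / DD)))"
    using k DD_pos by (simp add: field_simps)
  have "(DD / k) * (k * ((nn \<psi>)\<^sup>2 - CC \<psi>) - ((nn \<psi>)\<^sup>2 * SS - 2 * ((nn \<psi>)\<^sup>2 / DD))) \<ge> 0"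
    using h k DD_pos by (intro mult_nonneg_nonneg) auto
  then show ?thesis using id unfolding k_def by linarith
qed

end

lemma L2_sum:
  assumes "finite S"
  shows "L2_set (\<lambda>i. \<Sum>k\<in>S. f k i) A \<le> (\<Sum>k\<in>S. L2_set (f k) A)"
  using assms
proof (induction S rule: finite_induct)
  case empty
  then show ?case by (simp add: L2_set_0')
next
  case (insert x S)
  have "L2_set (\<lambda>i. \<Sum>k\<in>insert x S. f k i) A = L2_set (\<lambda>i. f x i + (\<Sum>k\<in>S. f k i)) A"
    using insert.hyps by simp
  also have "\<dots> \<le> L2_set (f x) A + L2_set (\<lambda>i. \<Sum>k\<in>S. f k i) A" by (rule L2_set_triangle_ineq)
  also have "\<dots> \<le> L2_set (f x) A + (\<Sum>k\<in>S. L2_set (f k) A)" using insert.IH by simp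
  also have "\<dots> = (\<Sum>k\<in>insert x S. L2_set (f k) A)" using insert.hyps by simp
  finally show ?case .
qed

context qsetup begin

definition dm where "dm = real (Max (d ` {..<N}))"
definition Mb where "Mb = (if N = 1 then DD - 1
   else if N = 2 \<or> (N \<ge> 3 \<and> DD / dm\<^sup>2 < 1) then DD + 1 / (real N - 1) - DD / (real N - 1) * SS
   else DD + 2 / (real N - 2) - DD / (real N - 2) * SS)"

lemma pure_all: "DD * CC \<psi> \<le> Mb * (nn \<psi>)\<^sup>2"
proof -
  consider (one) "N = 1" | (two) "N \<noteq> 1" "N = 2 \<or> (N \<ge> 3 \<and> DD / dm\<^sup>2 < 1)"
    | (three) "N \<noteq> 1" "\<not> (N = 2 \<or> (N \<ge> 3 \<and> DD / dm\<^sup>2 < 1))" by blast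
  then show ?thesis
  proof cases
    case one then show ?thesis using pure1 unfolding Mb_def by simp
  next
    case two
    then have "N \<ge> 2" using N1 by auto
    then show ?thesis using pure2 unfolding Mb_def if_not_P[OF two(1)] if_P[OF two(2)] by blast
  next
    case three
    then have N3: "N \<ge> 3" and r: "DD / dm\<^sup>2 \<ge> 1" using N1 by auto
    have big: "\<forall>l<N. (real (d l))\<^sup>2 \<le> DD"
    proof (intro allI impI)
      fix l assume l: "l < N"
      have "d l \<le> Max (d ` {..<N})" using l by (intro Max_ge) auto
      then have dle: "real (d l) \<le> dm" unfolding dm_def by simp
      have dmpos: "dm > 0" using dle dl_pos[OF l] by simp
      have "dm\<^sup>2 \<le> DD" using r dmpos by (simp add: field_simps)
      moreover have "(real (d l))\<^sup>2 \<le> dm\<^sup>2" using dle dl_pos[OF l] by (intro power_mono) auto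
      ultimately show "(real (d l))\<^sup>2 \<le> DD" by simp
    qed
    show ?thesis using pure3[OF N3 big] unfolding Mb_def if_not_P[OF three(1)] if_not_P[OF three(2)] .
  qed
qed

lemma KK_pos: "KK > 0" unfolding KK_def using kpos by (intro prod_pos) (auto intro: less_le_trans[of 0 1])

lemma Wt_corr: "i \<in> corr_idx N d \<Longrightarrow> Wt i = KK"
  unfolding Wt_def KK_def wt_def using corr_mem by (intro prod.cong refl) auto

lemma cmod_cc_corr: "i \<in> corr_idx N d \<Longrightarrow> (cmod (cc \<psi> i))\<^sup>2 = KK * xx \<psi> i"
  unfolding xx_def Wt_corr using KK_pos by simp

lemma L2_pure: "L2_set (\<lambda>i. cmod (cc \<psi> i)) (corr_idx N d) \<le> sqrt (KK * Mb / DD) * nn \<psi>"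
proof -
  have "L2_set (\<lambda>i. cmod (cc \<psi> i)) (corr_idx N d) = sqrt (KK * CC \<psi>)"
    unfolding L2_set_def CC_def using cmod_cc_corr by (simp add: sum_distrib_left)
  also have "\<dots> \<le> sqrt (KK * Mb / DD * (nn \<psi>)\<^sup>2)"
  proof (rule real_sqrt_le_mono)
    have "KK * (DD * CC \<psi>) \<le> KK * (Mb * (nn \<psi>)\<^sup>2)" using pure_all KK_pos by (intro mult_left_mono) auto
    then show "KK * CC \<psi> \<le> KK * Mb / DD * (nn \<psi>)\<^sup>2" using DD_pos by (simp add: field_simps)
  qed
  also have "\<dots> = sqrt (KK * Mb / DD) * nn \<psi>"
  proof -
    have "nn \<psi> \<ge> 0" unfolding nn_def by (intro sum_nonneg) auto
    then have "sqrt ((nn \<psi>)\<^sup>2) = nn \<psi>" by simp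
    then show ?thesis by (metis real_sqrt_mult)
  qed
  finally show ?thesis .
qed

lemma mixed:
  assumes qs: "quantum_state N d \<rho>"
  shows "frob_sq_corr N d \<kappa> G \<rho> \<le> DD / KK * Mb"
proof -
  have ps: "psd (idx N d) \<rho>" and tr: "(\<Sum>a\<in>idx N d. \<rho> a a) = 1"
    using qs unfolding quantum_state_def psd_def qf_def Let_def by auto
  obtain w where w: "\<forall>a\<in>idx N d. \<forall>b\<in>idx N d. \<rho> a b = (\<Sum>k\<in>idx N d. w k a * cnj (w k b))"
    using psd_decomp[OF fin_idx ps] by blast
  have ce: "corr_entry N d \<kappa> G \<rho> i = complex_of_real (DD / KK) * (\<Sum>k\<in>idx N d. cc (w k) i)" for i
  proof -
    have "(\<Sum>a\<in>idx N d. \<Sum>b\<in>idx N d. \<rho> a b * (\<Prod>l<N. G l (i l) (b l) (a l)))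
        = (\<Sum>a\<in>idx N d. \<Sum>b\<in>idx N d. \<Sum>k\<in>idx N d. w k a * cnj (w k b) * (\<Prod>l<N. G l (i l) (b l) (a l)))"
      using w by (intro sum.cong refl) (simp add: sum_distrib_right)
    also have "\<dots> = (\<Sum>a\<in>idx N d. \<Sum>k\<in>idx N d. \<Sum>b\<in>idx N d. w k a * cnj (w k b) * (\<Prod>l<N. G l (i l) (b l) (a l)))"
      by (rule sum.cong[OF refl], rule sum.swap)
    also have "\<dots> = (\<Sum>k\<in>idx N d. \<Sum>a\<in>idx N d. \<Sum>b\<in>idx N d. w k a * cnj (w k b) * (\<Prod>l<N. G l (i l) (b l) (a l)))"
      by (rule sum.swap)
    finally show ?thesis unfolding corr_entry_def cc_def DD_def KK_def by simp
  qed
  have nsum: "(\<Sum>k\<in>idx N d. nn (w k)) = 1"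
  proof -
    have "complex_of_real (\<Sum>k\<in>idx N d. nn (w k)) = (\<Sum>a\<in>idx N d. \<Sum>k\<in>idx N d. complex_of_real ((cmod (w k a))\<^sup>2))"
      unfolding nn_def of_real_sum by (rule sum.swap)
    also have "\<dots> = (\<Sum>a\<in>idx N d. \<rho> a a)"
    proof (intro sum.cong refl)
      fix a assume a: "a \<in> idx N d"
      show "(\<Sum>k\<in>idx N d. complex_of_real ((cmod (w k a))\<^sup>2)) = \<rho> a a"
      proof -
        have "(\<Sum>k\<in>idx N d. complex_of_real ((cmod (w k a))\<^sup>2)) = (\<Sum>k\<in>idx N d. w k a * cnj (w k a))"
          by (intro sum.cong refl) (metis complex_norm_square of_real_power)
        then show ?thesis using w a by simp
      qed
    qed
    finally have "complex_of_real (\<Sum>k\<in>idx N d. nn (w k)) = 1" using tr by simp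
    then show ?thesis by (metis of_real_eq_1_iff)
  qed
  define c where "c = KK * Mb / DD"
  have L2: "L2_set (\<lambda>i. cmod (\<Sum>k\<in>idx N d. cc (w k) i)) (corr_idx N d) \<le> sqrt c"
  proof -
    have "L2_set (\<lambda>i. cmod (\<Sum>k\<in>idx N d. cc (w k) i)) (corr_idx N d)
        \<le> L2_set (\<lambda>i. \<Sum>k\<in>idx N d. cmod (cc (w k) i)) (corr_idx N d)"
      by (rule L2_set_mono) (auto intro: norm_sum)
    also have "\<dots> \<le> (\<Sum>k\<in>idx N d. L2_set (\<lambda>i. cmod (cc (w k) i)) (corr_idx N d))"
      by (rule L2_sum[OF fin_idx])
    also have "\<dots> \<le> (\<Sum>k\<in>idx N d. sqrt c * nn (w k))"
      unfolding c_def by (rule sum_mono) (rule L2_pure)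
    also have "\<dots> = sqrt c" using nsum by (simp add: sum_distrib_left[symmetric])
    finally show ?thesis .
  qed
  have L0: "L2_set (\<lambda>i. cmod (\<Sum>k\<in>idx N d. cc (w k) i)) (corr_idx N d) \<ge> 0" by simp
  have c0: "c \<ge> 0" using L2 L0 by (metis order.trans real_sqrt_ge_0_iff)
  have sq: "(\<Sum>i\<in>corr_idx N d. (cmod (\<Sum>k\<in>idx N d. cc (w k) i))\<^sup>2) \<le> c"
  proof -
    have "(L2_set (\<lambda>i. cmod (\<Sum>k\<in>idx N d. cc (w k) i)) (corr_idx N d))\<^sup>2 \<le> (sqrt c)\<^sup>2"
      using L2 L0 by (intro power_mono) auto
    then show ?thesis unfolding L2_set_def using c0 by (simp add: sum_nonneg)
  qed
  have "frob_sq_corr N d \<kappa> G \<rho> = (DD / KK)\<^sup>2 * (\<Sum>i\<in>corr_idx N d. (cmod (\<Sum>k\<in>idx N d. cc (w k) i))\<^sup>2)"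
  proof -
    have pi: "(cmod (corr_entry N d \<kappa> G \<rho> i))\<^sup>2 = (DD / KK)\<^sup>2 * (cmod (\<Sum>k\<in>idx N d. cc (w k) i))\<^sup>2" for i
    proof -
      have "\<bar>DD / KK\<bar> = DD / KK" using DD_pos KK_pos by simp
      then have "cmod (corr_entry N d \<kappa> G \<rho> i) = (DD / KK) * cmod (\<Sum>k\<in>idx N d. cc (w k) i)"
        unfolding ce norm_mult norm_of_real by simp
      then show ?thesis by (simp only: power_mult_distrib)
    qed
    show ?thesis unfolding frob_sq_corr_def pi by (simp add: sum_distrib_left)
  qed
  also have "\<dots> \<le> (DD / KK)\<^sup>2 * c" using sq by (intro mult_left_mono) auto
  also have "\<dots> = DD / KK * Mb" unfolding c_def using DD_pos KK_pos by (simp add: field_simps power2_eq_square)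
  finally show ?thesis .
qed

lemma mbound_eq: "mbound N d \<kappa> = DD / KK * Mb"
proof (cases "N = 1")
  case True
  then show ?thesis unfolding mbound_def Mb_def DD_def KK_def by (simp add: Let_def power2_eq_square field_simps)
next
  case False
  then show ?thesis unfolding mbound_def Mb_def DD_def KK_def SS_def dm_def by (simp add: Let_def)
qed

end

theorem lemma2:
  fixes N :: nat and d :: "nat \<Rightarrow> nat" and \<kappa> :: "nat \<Rightarrow> real"
    and G :: "nat \<Rightarrow> nat \<Rightarrow> nat \<Rightarrow> nat \<Rightarrow> complex"
    and \<rho> :: "(nat \<Rightarrow> nat) \<Rightarrow> (nat \<Rightarrow> nat) \<Rightarrow> complex"
  assumes "N \<ge> 1"
    and "\<forall>l<N. d l > 0"
    and "\<forall>l<N. \<kappa> l \<ge> 1"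
    and "\<forall>l<N. gen_basis (d l) (\<kappa> l) (G l)"
    and "quantum_state N d \<rho>"
  shows "frob_sq_corr N d \<kappa> G \<rho> \<le> mbound N d \<kappa>"
proof -
  interpret qsetup N d \<kappa> G using assms(1-4) by unfold_locales
  show ?thesis using mixed[OF assms(5)] mbound_eq by simp
qed

end
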